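(* Let $T$ be the linear operator on (real) $L^2(0,\pi/2)$ defined by $(Tf)(v)=\int_0^{(\pi/2)-v} f(u)\,du$. For every $f\in L^2(0,\pi/2)$ we have, with convergence in $L^2(0,\pi/2)$, $$f=\sum_{k=-\infty}^{\infty} f_k\cos((4k+1)u),\qquad f_k=\frac{4}{\pi}\int_0^{\pi/2} f(u)\cos((4k+1)u)\,du,$$ and for each integer $n\ge 0$, $$\int_0^{\pi/2} f(u)\,(T^nf)(u)\,du=\frac{\pi}{4}\sum_{k=-\infty}^{\infty}\frac{f_k^2}{(4k+1)^n}.$$
   Context: $T^0$ denotes the identity operator. *)

theory Defs
  imports "HOL-Analysis.Analysis"
begin

definition L2_on :: "(real \<Rightarrow> real) \<Rightarrow> real set \<Rightarrow> bool" where
  "L2_on f S \<longleftrightarrow> f measurable_on S \<and> (\<lambda>x. (f x)\<^sup>2) integrable_on S"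

definition T_op :: "(real \<Rightarrow> real) \<Rightarrow> (real \<Rightarrow> real)" where
  "T_op f = (\<lambda>v. integral {0..pi/2 - v} f)"

definition coeff_k :: "(real \<Rightarrow> real) \<Rightarrow> int \<Rightarrow> real" where
  "coeff_k f k = 4 / pi * integral {0..pi/2} (\<lambda>u. f u * cos ((4 * real_of_int k + 1) * u))"

end

theory Submission
  imports Defs
begin

definition phi :: "int \<Rightarrow> real \<Rightarrow> real" where
  "phi k u = cos ((4 * real_of_int k + 1) * u)"

lemma cos_has_integral:
  fixes m :: real
  shows "((\<lambda>u. cos (m*u)) has_integral (if m = 0 then pi/2 else sin (m*(pi/2))/m)) {0..pi/2}"
proof (cases "m = 0")
  case True
  then show ?thesis using has_integral_const_real[of "1::real" 0 "pi/2"] by simp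
next
  case False
  have "((\<lambda>u. cos (m*u)) has_integral ((\<lambda>u. sin (m*u)/m) (pi/2) - (\<lambda>u. sin (m*u)/m) 0)) {0..pi/2}"
    apply (rule fundamental_theorem_of_calculus)
     apply simp
    apply (rule has_real_derivative_iff_has_vector_derivative[THEN iffD1])
    using False
    by (auto intro!: derivative_eq_intros)
  then show ?thesis using False by simp
qed

lemma sin_int_pi: "sin (real_of_int n * pi) = 0"
  by (simp add: sin_zero_iff_int2)

lemma phi_orth:
  "((\<lambda>u. phi j u * phi k u) has_integral (if j = k then pi/4 else 0)) {0..pi/2}"
proof -
  define a where "a = 4 * real_of_int j + 1"
  define b where "b = 4 * real_of_int k + 1"
  have eq: "(\<lambda>u. phi j u * phi k u) = (\<lambda>u. cos ((a - b) * u) / 2 + cos ((a + b) * u) / 2)"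
    by (auto simp: phi_def a_def b_def cos_times_cos algebra_simps add_divide_distrib)
  have s1: "sin ((a - b) * (pi/2)) = 0"
  proof -
    have "(a - b) * (pi/2) = real_of_int (2*(j-k)) * pi" by (simp add: a_def b_def algebra_simps)
    then show ?thesis using sin_int_pi by metis
  qed
  have s2: "sin ((a + b) * (pi/2)) = 0"
  proof -
    have "(a + b) * (pi/2) = real_of_int (2*(j+k)+1) * pi" by (simp add: a_def b_def algebra_simps)
    then show ?thesis using sin_int_pi by metis
  qed
  have nz: "a + b \<noteq> 0"
  proof
    assume "a + b = 0"
    then have "real_of_int (4*(j+k)+2) = 0" by (simp add: a_def b_def algebra_simps)
    then have "4*(j+k)+2 = 0" by linarith
    then show False by presburger
  qed
  have abz: "a - b = 0 \<longleftrightarrow> j = k" by (simp add: a_def b_def)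
  have i1: "((\<lambda>u. cos ((a - b) * u) / 2) has_integral (if j = k then pi/4 else 0)) {0..pi/2}"
    using has_integral_divide[OF cos_has_integral[of "a-b"], of 2] s1 abz by (auto split: if_splits)
  have i2: "((\<lambda>u. cos ((a + b) * u) / 2) has_integral 0) {0..pi/2}"
    using has_integral_divide[OF cos_has_integral[of "a+b"], of 2] s2 nz by auto
  show ?thesis unfolding eq using has_integral_add[OF i1 i2] by simp
qed

lemma abs_mult_le_sq: "\<bar>(x::real) * y\<bar> \<le> (x\<^sup>2 + y\<^sup>2) / 2"
proof -
  have "0 \<le> (\<bar>x\<bar> - \<bar>y\<bar>)\<^sup>2" by simp
  then show ?thesis by (simp add: power2_eq_square algebra_simps abs_mult)
qed

lemma lebI: "{0..pi/2::real} \<in> sets lebesgue" by simp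

lemma L2_bm: "L2_on f {0..pi/2} \<longleftrightarrow> f \<in> borel_measurable (lebesgue_on {0..pi/2}) \<and> (\<lambda>x. (f x)\<^sup>2) integrable_on {0..pi/2}"
  by (simp add: L2_on_def measurable_on_iff_borel_measurable)

lemma L2_prod_abs:
  assumes "L2_on a {0..pi/2}" "L2_on b {0..pi/2}"
  shows "(\<lambda>x. \<bar>a x * b x\<bar>) integrable_on {0..pi/2}"
proof (rule measurable_bounded_by_integrable_imp_integrable_real[where g = "\<lambda>x. ((a x)\<^sup>2 + (b x)\<^sup>2) / 2"])
  show "(\<lambda>x. \<bar>a x * b x\<bar>) \<in> borel_measurable (lebesgue_on {0..pi / 2})"
    using assms by (auto simp: L2_bm)
  show "(\<lambda>x. ((a x)\<^sup>2 + (b x)\<^sup>2) / 2) integrable_on {0..pi / 2}"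
    using assms by (auto simp: L2_bm intro!: integrable_add integrable_divide)
qed (simp_all only: abs_abs abs_mult_le_sq lebI)

lemma L2_prod:
  assumes "L2_on a {0..pi/2}" "L2_on b {0..pi/2}"
  shows "(\<lambda>x. a x * b x) integrable_on {0..pi/2}"
proof (rule measurable_bounded_by_integrable_imp_integrable_real[where g = "\<lambda>x. ((a x)\<^sup>2 + (b x)\<^sup>2) / 2"])
  show "(\<lambda>x. a x * b x) \<in> borel_measurable (lebesgue_on {0..pi / 2})"
    using assms by (auto simp: L2_bm)
  show "(\<lambda>x. ((a x)\<^sup>2 + (b x)\<^sup>2) / 2) integrable_on {0..pi / 2}"
    using assms by (auto simp: L2_bm intro!: integrable_add integrable_divide)
qed (simp_all only: abs_abs abs_mult_le_sq lebI)

lemma L2_cont: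
  assumes "continuous_on {0..pi/2} f"
  shows "L2_on f {0..pi/2}"
  unfolding L2_bm
proof
  show "f \<in> borel_measurable (lebesgue_on {0..pi / 2})"
    by (rule continuous_imp_measurable_on_sets_lebesgue[OF assms]) simp
  show "(\<lambda>x. (f x)\<^sup>2) integrable_on {0..pi / 2}"
    by (rule integrable_continuous_real) (intro continuous_intros assms)
qed

lemma L2_dom:
  assumes "f \<in> borel_measurable (lebesgue_on {0..pi/2})" "L2_on g {0..pi/2}"
    "\<And>x. x \<in> {0..pi/2} \<Longrightarrow> \<bar>f x\<bar> \<le> \<bar>g x\<bar>"
  shows "L2_on f {0..pi/2}"
  unfolding L2_bm
proof
  show "f \<in> borel_measurable (lebesgue_on {0..pi / 2})" by fact
  show "(\<lambda>x. (f x)\<^sup>2) integrable_on {0..pi / 2}"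
  proof (rule measurable_bounded_by_integrable_imp_integrable_real[where g = "\<lambda>x. (g x)\<^sup>2"])
    show "(\<lambda>x. (f x)\<^sup>2) \<in> borel_measurable (lebesgue_on {0..pi / 2})"
      using assms by auto
    show "(\<lambda>x. (g x)\<^sup>2) integrable_on {0..pi / 2}" using assms(2) by (simp add: L2_bm)
    fix x assume "x \<in> {0..pi/2}"
    then show "\<bar>(f x)\<^sup>2\<bar> \<le> (g x)\<^sup>2" using assms(3)[of x]
      by (simp add: abs_le_square_iff)
  qed simp
qed

lemma L2_add:
  assumes "L2_on a {0..pi/2}" "L2_on b {0..pi/2}"
  shows "L2_on (\<lambda>x. a x + b x) {0..pi/2}"
  unfolding L2_bm
proof
  show "(\<lambda>x. a x + b x) \<in> borel_measurable (lebesgue_on {0..pi / 2})"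
    using assms by (auto simp: L2_bm)
  have "(\<lambda>x. (a x)\<^sup>2 + (b x)\<^sup>2 + 2 * (a x * b x)) integrable_on {0..pi / 2}"
    using assms L2_prod[OF assms] by (auto simp: L2_bm intro!: integrable_add integrable_on_mult_right)
  then show "(\<lambda>x. (a x + b x)\<^sup>2) integrable_on {0..pi / 2}"
    by (simp add: power2_eq_square algebra_simps)
qed

lemma L2_cmul:
  assumes "L2_on a {0..pi/2}"
  shows "L2_on (\<lambda>x. c * a x) {0..pi/2}"
  unfolding L2_bm
proof
  show "(\<lambda>x. c * a x) \<in> borel_measurable (lebesgue_on {0..pi / 2})"
    using assms by (auto simp: L2_bm)
  have "(\<lambda>x. c\<^sup>2 * (a x)\<^sup>2) integrable_on {0..pi / 2}"
    using assms by (auto simp: L2_bm intro!: integrable_on_mult_right)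
  then show "(\<lambda>x. (c * a x)\<^sup>2) integrable_on {0..pi / 2}"
    by (simp add: power_mult_distrib)
qed

lemma L2_minus:
  assumes "L2_on a {0..pi/2}" shows "L2_on (\<lambda>x. - a x) {0..pi/2}"
  using L2_cmul[OF assms, of "-1"] by simp

lemma L2_diff:
  assumes "L2_on a {0..pi/2}" "L2_on b {0..pi/2}"
  shows "L2_on (\<lambda>x. a x - b x) {0..pi/2}"
  using L2_add[OF assms(1) L2_minus[OF assms(2)]] by simp

lemma L2_phi: "L2_on (phi k) {0..pi/2}"
  unfolding phi_def by (rule L2_cont) (intro continuous_intros)

lemma L2_sum:
  assumes "finite K" "\<And>k. k \<in> K \<Longrightarrow> L2_on (g k) {0..pi/2}"
  shows "L2_on (\<lambda>x. \<Sum>k\<in>K. g k x) {0..pi/2}"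
  using assms
proof (induction K rule: finite_induct)
  case empty
  then show ?case using L2_cont[of "\<lambda>x. 0"] by simp
next
  case (insert k K)
  then show ?case using L2_add[of "g k" "\<lambda>x. \<Sum>k\<in>K. g k x"] by simp
qed

lemma L2_sum_phi: "finite K \<Longrightarrow> L2_on (\<lambda>x. \<Sum>k\<in>K. d k * phi k x) {0..pi/2}"
  by (rule L2_sum) (auto intro: L2_cmul L2_phi)

lemma coeff_phi: "coeff_k f k = 4 / pi * integral {0..pi/2} (\<lambda>u. f u * phi k u)"
  by (simp add: coeff_k_def phi_def)

lemma int_f_phi: "L2_on f {0..pi/2} \<Longrightarrow> integral {0..pi/2} (\<lambda>u. f u * phi k u) = pi/4 * coeff_k f k"
  by (simp add: coeff_phi)

lemma expand:
  assumes f: "L2_on f {0..pi/2}" and K: "finite K"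
  shows "integral {0..pi/2} (\<lambda>u. (f u - (\<Sum>k\<in>K. d k * phi k u))\<^sup>2)
       = integral {0..pi/2} (\<lambda>u. (f u)\<^sup>2) - pi/4 * (\<Sum>k\<in>K. (coeff_k f k)\<^sup>2)
         + pi/4 * (\<Sum>k\<in>K. (d k - coeff_k f k)\<^sup>2)"
proof -
  define S where "S = (\<lambda>u. \<Sum>k\<in>K. d k * phi k u)"
  have LS: "L2_on S {0..pi/2}" unfolding S_def using L2_sum_phi[OF K] .
  have ifS: "(\<lambda>u. f u * S u) integrable_on {0..pi/2}" by (rule L2_prod[OF f LS])
  have iS2: "(\<lambda>u. (S u)\<^sup>2) integrable_on {0..pi/2}" using LS by (simp add: L2_bm)
  have if2: "(\<lambda>u. (f u)\<^sup>2) integrable_on {0..pi/2}" using f by (simp add: L2_bm)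
  have e1: "(\<lambda>u. (f u - S u)\<^sup>2) = (\<lambda>u. ((f u)\<^sup>2 - 2 * (f u * S u)) + (S u)\<^sup>2)"
    by (simp add: power2_eq_square algebra_simps)
  have I1: "integral {0..pi/2} (\<lambda>u. (f u - S u)\<^sup>2)
      = integral {0..pi/2} (\<lambda>u. (f u)\<^sup>2) - 2 * integral {0..pi/2} (\<lambda>u. f u * S u)
        + integral {0..pi/2} (\<lambda>u. (S u)\<^sup>2)"
    unfolding e1
    by (subst integral_add) (auto simp: integral_diff if2 ifS iS2 intro!: integrable_diff integrable_on_mult_right)
  have fS: "integral {0..pi/2} (\<lambda>u. f u * S u) = (\<Sum>k\<in>K. d k * (pi/4 * coeff_k f k))"
  proof -
    have "(\<lambda>u. f u * S u) = (\<lambda>u. \<Sum>k\<in>K. d k * (f u * phi k u))"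
      by (simp add: S_def sum_distrib_left algebra_simps)
    then have "integral {0..pi/2} (\<lambda>u. f u * S u) = (\<Sum>k\<in>K. integral {0..pi/2} (\<lambda>u. d k * (f u * phi k u)))"
      using K by (simp add: integral_sum L2_prod[OF f L2_phi] integrable_on_mult_right)
    then show ?thesis using int_f_phi[OF f] by simp
  qed
  have S2: "integral {0..pi/2} (\<lambda>u. (S u)\<^sup>2) = (\<Sum>k\<in>K. (d k)\<^sup>2 * (pi/4))"
  proof -
    have "(\<lambda>u. (S u)\<^sup>2) = (\<lambda>u. \<Sum>j\<in>K. \<Sum>k\<in>K. d j * d k * (phi j u * phi k u))"
      by (simp add: S_def power2_eq_square sum_product algebra_simps)
    moreover have "integral {0..pi/2} (\<lambda>u. \<Sum>j\<in>K. \<Sum>k\<in>K. d j * d k * (phi j u * phi k u))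
        = (\<Sum>j\<in>K. \<Sum>k\<in>K. d j * d k * (if j = k then pi/4 else 0))"
    proof -
      have ii: "integral {0..pi/2} (\<lambda>u. phi j u * phi k u) = (if j = k then pi/4 else 0)" for j k
        using phi_orth integral_unique by blast
      have int: "(\<lambda>u. phi j u * phi k u) integrable_on {0..pi/2}" for j k
        using phi_orth has_integral_integrable by blast
      have int2: "(\<lambda>u. d j * d k * (phi j u * phi k u)) integrable_on {0..pi/2}" for j k
        using integrable_on_mult_right[OF int] by blast
      have int3: "(\<lambda>u. \<Sum>k\<in>K. d j * d k * (phi j u * phi k u)) integrable_on {0..pi/2}" for j
        using K int2 by (simp add: integrable_sum)
      show ?thesis
        using K int2 int3 ii by (simp add: integral_sum)
    qed
    moreover have "(\<Sum>j\<in>K. \<Sum>k\<in>K. d j * d k * (if j = k then pi/4 else (0::real))) = (\<Sum>k\<in>K. (d k)\<^sup>2 * (pi/4))"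
      using K by (simp add: if_distrib power2_eq_square cong: if_cong)
    ultimately show ?thesis by simp
  qed
  have "integral {0..pi/2} (\<lambda>u. (f u - S u)\<^sup>2) = integral {0..pi/2} (\<lambda>u. (f u)\<^sup>2)
      - pi/4 * (\<Sum>k\<in>K. 2 * (d k * coeff_k f k)) + pi/4 * (\<Sum>k\<in>K. (d k)\<^sup>2)"
    using I1 fS S2 by (simp add: sum_distrib_left sum_distrib_right algebra_simps)
  also have "\<dots> = integral {0..pi/2} (\<lambda>u. (f u)\<^sup>2) - pi/4 * (\<Sum>k\<in>K. (coeff_k f k)\<^sup>2)
         + pi/4 * (\<Sum>k\<in>K. (d k - coeff_k f k)\<^sup>2)"
    by (simp add: power2_diff sum.distrib sum_subtractf algebra_simps sum_distrib_left)
  finally show ?thesis by (simp add: S_def)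
qed

inductive inV :: "(real \<Rightarrow> real) \<Rightarrow> bool" where
  zero: "inV (\<lambda>u. 0)"
| step: "inV g \<Longrightarrow> inV (\<lambda>u. g u + c * phi k u)"

lemma inV_repr:
  assumes "inV P"
  shows "\<exists>d N. (\<forall>k. k \<notin> {-int N..int N} \<longrightarrow> d k = 0) \<and>
           (\<forall>M\<ge>N. \<forall>u. P u = (\<Sum>k\<in>{-int M..int M}. d k * phi k u))"
  using assms
proof (induction rule: inV.induct)
  case zero
  show ?case by (rule exI[of _ "\<lambda>k. 0"], rule exI[of _ 0]) simp
next
  case (step g c k)
  then obtain d N where d0: "\<forall>k. k \<notin> {-int N..int N} \<longrightarrow> d k = 0"
    and dg: "\<forall>M\<ge>N. \<forall>u. g u = (\<Sum>k\<in>{-int M..int M}. d k * phi k u)" by blast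
  define N' where "N' = max N (nat \<bar>k\<bar>)"
  define d' where "d' = (\<lambda>j. d j + (if j = k then c else 0))"
  show ?case
  proof (rule exI[of _ d'], rule exI[of _ N'], intro conjI allI impI)
    fix j assume "j \<notin> {-int N'..int N'}"
    then show "d' j = 0" using d0 by (auto simp: d'_def N'_def)
  next
    fix M u assume M: "N' \<le> M"
    have kin: "k \<in> {-int M..int M}" using M by (auto simp: N'_def)
    have "(\<Sum>j\<in>{-int M..int M}. d' j * phi j u)
        = (\<Sum>j\<in>{-int M..int M}. d j * phi j u) + (\<Sum>j\<in>{-int M..int M}. (if j = k then c else 0) * phi j u)"
      by (simp add: d'_def distrib_right sum.distrib)
    also have "(\<Sum>j\<in>{-int M..int M}. (if j = k then c else 0) * phi j u) = c * phi k u"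
    proof -
      have "(\<Sum>j\<in>{-int M..int M}. (if j = k then c else 0) * phi j u) = (\<Sum>j\<in>{-int M..int M}. if j = k then c * phi k u else 0)"
        by (rule sum.cong) auto
      also have "\<dots> = c * phi k u" using kin by simp
      finally show ?thesis .
    qed
    finally show "g u + c * phi k u = (\<Sum>j\<in>{-int M..int M}. d' j * phi j u)"
      using dg M by (simp add: N'_def)
  qed
qed

lemma inV_add': "inV b \<Longrightarrow> inV a \<Longrightarrow> inV (\<lambda>u. a u + b u)"
proof (induction b rule: inV.induct)
  case zero then show ?case by simp
next
  case (step g c k)
  then show ?case using inV.step[of "\<lambda>u. a u + g u" c k] by (simp add: add.assoc)
qed

lemma inV_add: "inV a \<Longrightarrow> inV b \<Longrightarrow> inV (\<lambda>u. a u + b u)"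
  using inV_add' by blast

lemma inV_cmul: "inV a \<Longrightarrow> inV (\<lambda>u. c * a u)"
proof (induction a rule: inV.induct)
  case zero then show ?case by (simp add: inV.zero)
next
  case (step g c' k)
  then show ?case using inV.step[of "\<lambda>u. c * g u" "c * c'" k] by (simp add: distrib_left mult.assoc)
qed

lemma inV_phi: "inV (phi k)"
  using inV.step[OF inV.zero, of 1 k] by simp

lemma cos2_phi: "cos (2*u) * phi k u = phi (-k-1) u / 2 + phi (-k) u / 2"
proof -
  have "cos (2*u) * phi k u = (cos (2*u - (4 * real_of_int k + 1) * u) + cos (2*u + (4 * real_of_int k + 1) * u)) / 2"
    by (simp add: phi_def cos_times_cos)
  also have "cos (2*u - (4 * real_of_int k + 1) * u) = phi (-k) u"
    by (simp add: phi_def algebra_simps)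
  also have "cos (2*u + (4 * real_of_int k + 1) * u) = cos (- (2*u + (4 * real_of_int k + 1) * u))"
    by (rule cos_minus[symmetric])
  also have "\<dots> = phi (-k-1) u"
    by (simp add: phi_def algebra_simps)
  finally show ?thesis by simp
qed

lemma inV_cos2: "inV a \<Longrightarrow> inV (\<lambda>u. cos (2*u) * a u)"
proof (induction a rule: inV.induct)
  case zero then show ?case by (simp add: inV.zero)
next
  case (step g c k)
  have "inV (\<lambda>u. (cos (2*u) * g u + (c/2) * phi (-k-1) u) + (c/2) * phi (-k) u)"
    by (rule inV.step, rule inV.step, rule step.IH)
  moreover have "(\<lambda>u. (cos (2*u) * g u + (c/2) * phi (-k-1) u) + (c/2) * phi (-k) u)
      = (\<lambda>u. cos (2*u) * (g u + c * phi k u))"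
  proof
    fix u
    have "cos (2*u) * (g u + c * phi k u) = cos (2*u) * g u + c * (cos (2*u) * phi k u)"
      by (simp add: algebra_simps)
    also have "\<dots> = cos (2*u) * g u + c * (phi (-k-1) u / 2 + phi (-k) u / 2)"
      by (simp only: cos2_phi)
    finally show "(cos (2*u) * g u + (c/2) * phi (-k-1) u) + (c/2) * phi (-k) u = cos (2*u) * (g u + c * phi k u)"
      by (simp add: algebra_simps)
  qed
  ultimately show ?case by simp
qed

inductive inE :: "(real \<Rightarrow> real) \<Rightarrow> bool" where
  const: "inE (\<lambda>u. c)"
| cos2: "inE (\<lambda>u. cos (2*u))"
| add: "inE f \<Longrightarrow> inE g \<Longrightarrow> inE (\<lambda>u. f u + g u)"
| mult: "inE f \<Longrightarrow> inE g \<Longrightarrow> inE (\<lambda>u. f u * g u)"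

lemma inE_mulV: "inE e \<Longrightarrow> inV a \<Longrightarrow> inV (\<lambda>u. e u * a u)"
proof (induction e arbitrary: a rule: inE.induct)
  case (const c) then show ?case by (rule inV_cmul)
next
  case cos2 then show ?case by (rule inV_cos2)
next
  case (add f g) then show ?case using inV_add[of "\<lambda>u. f u * a u" "\<lambda>u. g u * a u"] by (simp add: distrib_right)
next
  case (mult f g)
  then show ?case using mult.IH(1)[OF mult.IH(2)[OF mult.prems]] by (simp add: mult.assoc)
qed

lemma inE_cont: "inE e \<Longrightarrow> continuous_on S e"
  by (induction rule: inE.induct) (auto intro!: continuous_intros)

lemma inV_cos_E: "inE e \<Longrightarrow> inV (\<lambda>u. cos u * e u)"
proof -
  assume "inE e"
  have "(\<lambda>u. cos u * e u) = (\<lambda>u. e u * phi 0 u)" by (auto simp: phi_def)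
  then show ?thesis using inE_mulV[OF \<open>inE e\<close> inV_phi[of 0]] by simp
qed

lemma approx_E:
  assumes "continuous_on {0..pi/2} d" "0 < e"
  shows "\<exists>g. inE g \<and> (\<forall>x\<in>{0..pi/2}. \<bar>d x - g x\<bar> < e)"
proof (rule Stone_Weierstrass_HOL[where P = inE])
  show "\<exists>f. inE f \<and> f x \<noteq> f y" if "x \<in> {0..pi/2} \<and> y \<in> {0..pi/2} \<and> x \<noteq> y" for x y
  proof (rule exI[of _ "\<lambda>u. cos (2*u)"], intro conjI inE.cos2)
    show "cos (2*x) \<noteq> cos (2*y)"
    proof
      assume "cos (2*x) = cos (2*y)"
      moreover have "0 \<le> 2*x" "2*x \<le> pi" "0 \<le> 2*y" "2*y \<le> pi" using that by auto
      ultimately have "2*x = 2*y" using cos_inj_pi by blast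
      then show False using that by simp
    qed
  qed
next
  show "compact {0..pi/2::real}" by simp
  show "inE (\<lambda>x. c)" for c by (rule inE.const)
  show "continuous_on {0..pi/2} f" if "inE f" for f using that by (rule inE_cont)
  show "inE (\<lambda>x. f x + g x)" if "inE f \<and> inE g" for f g using that by (blast intro: inE.add)
  show "inE (\<lambda>x. f x * g x)" if "inE f \<and> inE g" for f g using that by (blast intro: inE.mult)
qed (rule assms)+

lemma dct_helper:
  assumes N: "negligible N" and Fi: "\<And>n. F n integrable_on {0..pi/2}"
    and H: "H integrable_on {0..pi/2}"
    and B: "\<And>n x. x \<in> {0..pi/2} \<Longrightarrow> \<bar>F n x\<bar> \<le> H x"
    and L: "\<And>x. x \<in> {0..pi/2} - N \<Longrightarrow> (\<lambda>n. F n x) \<longlonglongrightarrow> (0::real)"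
  shows "(\<lambda>n. integral {0..pi/2} (F n)) \<longlonglongrightarrow> 0"
proof -
  define G where "G = (\<lambda>n x. if x \<in> N then 0 else F n x)"
  have Gi: "G n integrable_on {0..pi/2}" for n
    by (rule integrable_spike[OF Fi N]) (simp add: G_def)
  have GF: "integral {0..pi/2} (F n) = integral {0..pi/2} (G n)" for n
    by (rule integral_spike[OF N]) (simp add: G_def)
  have "(\<lambda>n. integral {0..pi/2} (G n)) \<longlonglongrightarrow> integral {0..pi/2} (\<lambda>x. 0::real)"
  proof (rule dominated_convergence(2)[OF Gi H])
    fix n x assume "x \<in> {0..pi/2}"
    then show "norm (G n x) \<le> H x" using B[of x n] by (auto simp: G_def)
  next
    fix x assume x: "x \<in> {0..pi/2}"
    show "(\<lambda>n. G n x) \<longlonglongrightarrow> 0"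
    proof (cases "x \<in> N")
      case True then show ?thesis by (simp add: G_def)
    next
      case False then show ?thesis using L[of x] x by (simp add: G_def)
    qed
  qed
  then show ?thesis using GF by simp
qed

lemma sq_tri:
  assumes "L2_on a {0..pi/2}" "L2_on b {0..pi/2}" "L2_on c {0..pi/2}"
  shows "integral {0..pi/2} (\<lambda>u. (a u - c u)\<^sup>2) \<le>
     2 * integral {0..pi/2} (\<lambda>u. (a u - b u)\<^sup>2) + 2 * integral {0..pi/2} (\<lambda>u. (b u - c u)\<^sup>2)"
proof -
  have i1: "(\<lambda>u. (a u - b u)\<^sup>2) integrable_on {0..pi/2}" using L2_diff[OF assms(1,2)] by (simp add: L2_bm)
  have i2: "(\<lambda>u. (b u - c u)\<^sup>2) integrable_on {0..pi/2}" using L2_diff[OF assms(2,3)] by (simp add: L2_bm)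
  have i3: "(\<lambda>u. (a u - c u)\<^sup>2) integrable_on {0..pi/2}" using L2_diff[OF assms(1,3)] by (simp add: L2_bm)
  have "integral {0..pi/2} (\<lambda>u. (a u - c u)\<^sup>2) \<le> integral {0..pi/2} (\<lambda>u. 2 * (a u - b u)\<^sup>2 + 2 * (b u - c u)\<^sup>2)"
  proof (rule integral_le[OF i3])
    show "(\<lambda>u. 2 * (a u - b u)\<^sup>2 + 2 * (b u - c u)\<^sup>2) integrable_on {0..pi/2}"
      using i1 i2 by (intro integrable_add integrable_on_mult_right)
    fix u
    have "0 \<le> ((a u - b u) - (b u - c u))\<^sup>2" by simp
    then show "(a u - c u)\<^sup>2 \<le> 2 * (a u - b u)\<^sup>2 + 2 * (b u - c u)\<^sup>2"
      by (simp add: power2_eq_square algebra_simps)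
  qed
  also have "\<dots> = 2 * integral {0..pi/2} (\<lambda>u. (a u - b u)\<^sup>2) + 2 * integral {0..pi/2} (\<lambda>u. (b u - c u)\<^sup>2)"
    using i1 i2 by (simp add: integral_add integrable_on_mult_right)
  finally show ?thesis .
qed

lemma limit_small:
  assumes "(\<lambda>n. X n) \<longlonglongrightarrow> (0::real)" "0 < e"
  shows "\<exists>n. X n < e"
proof -
  from assms have "eventually (\<lambda>n. dist (X n) 0 < e) sequentially" by (rule tendstoD)
  then obtain n where "dist (X n) 0 < e" by (auto dest: eventually_happens)
  then have "X n < e" by (simp add: dist_real_def abs_less_iff)
  then show ?thesis by blast
qed

lemma D1:
  assumes g: "L2_on g {0..pi/2}" and e: "0 < e"
  shows "\<exists>h M. h \<in> borel_measurable (lebesgue_on {0..pi/2}) \<and> (\<forall>x. \<bar>h x\<bar> \<le> M) \<and>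
           integral {0..pi/2} (\<lambda>u. (g u - h u)\<^sup>2) < e"
proof -
  define h where "h = (\<lambda>(n::nat) x. max (- real n) (min (real n) (g x)))"
  have gm: "g \<in> borel_measurable (lebesgue_on {0..pi/2})" using g by (simp add: L2_bm)
  have hm: "h n \<in> borel_measurable (lebesgue_on {0..pi/2})" for n
    unfolding h_def using gm by measurable
  have hb: "\<bar>h n x\<bar> \<le> real n" for n x by (auto simp: h_def)
  have le: "\<bar>(g x - h n x)\<^sup>2\<bar> \<le> (g x)\<^sup>2" for n x
  proof -
    have "\<bar>g x - h n x\<bar> \<le> \<bar>g x\<bar>" by (auto simp: h_def max_def min_def)
    then have "(g x - h n x)\<^sup>2 \<le> (g x)\<^sup>2" by (simp add: abs_le_square_iff)
    then show ?thesis by simp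
  qed
  have "(\<lambda>n. integral {0..pi/2} (\<lambda>x. (g x - h n x)\<^sup>2)) \<longlonglongrightarrow> 0"
  proof (rule dct_helper[where N = "{}" and H = "\<lambda>x. (g x)\<^sup>2"])
    show "(\<lambda>x. (g x)\<^sup>2) integrable_on {0..pi/2}" using g by (simp add: L2_bm)
    show "(\<lambda>x. (g x - h n x)\<^sup>2) integrable_on {0..pi/2}" for n
    proof (rule measurable_bounded_by_integrable_imp_integrable_real[where g = "\<lambda>x. (g x)\<^sup>2"])
      show "(\<lambda>x. (g x - h n x)\<^sup>2) \<in> borel_measurable (lebesgue_on {0..pi/2})"
        using gm hm by measurable
    qed (use le g in \<open>auto simp: L2_bm\<close>)
    show "\<bar>(g x - h n x)\<^sup>2\<bar> \<le> (g x)\<^sup>2" for n x by (rule le)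
    fix x
    obtain n0 :: nat where "\<bar>g x\<bar> \<le> real n0" using real_arch_simple by blast
    then have "eventually (\<lambda>n. (g x - h n x)\<^sup>2 = 0) sequentially"
      by (intro eventually_sequentiallyI[of n0]) (auto simp: h_def)
    then show "(\<lambda>n. (g x - h n x)\<^sup>2) \<longlonglongrightarrow> 0"
      by (rule tendsto_eventually)
  qed simp
  then obtain n where "integral {0..pi/2} (\<lambda>x. (g x - h n x)\<^sup>2) < e" using limit_small e by blast
  then show ?thesis using hm hb by blast
qed

lemma D2:
  fixes h :: "real \<Rightarrow> real"
  assumes hm: "h \<in> borel_measurable (lebesgue_on {0..pi/2})" and hb: "\<And>x. \<bar>h x\<bar> \<le> M" and e: "0 < e"
  shows "\<exists>C. continuous_on UNIV C \<and> (\<forall>x. \<bar>C x\<bar> \<le> M) \<and> integral {0..pi/2} (\<lambda>u. (h u - C u)\<^sup>2) < e"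
proof -
  have M0: "0 \<le> M" using abs_ge_zero[of "h 0"] hb[of 0] by linarith
  have "h measurable_on {0..pi/2}" using hm measurable_on_iff_borel_measurable[OF lebI] by blast
  then obtain N G where N: "negligible N" and Gc: "\<And>n. continuous_on UNIV (G n)"
    and GL: "\<And>x. x \<notin> N \<Longrightarrow> (\<lambda>n. G n x) \<longlonglongrightarrow> (if x \<in> {0..pi/2} then h x else 0)"
    unfolding measurable_on_def by blast
  define C where "C = (\<lambda>n x. max (- M) (min M (G n x)))"
  have Cc: "continuous_on UNIV (C n)" for n
    unfolding C_def by (intro continuous_intros Gc)
  have Cb: "\<bar>C n x\<bar> \<le> M" for n x using M0 by (auto simp: C_def)
  have Cm: "C n \<in> borel_measurable (lebesgue_on {0..pi/2})" for n
    by (rule continuous_imp_measurable_on_sets_lebesgue[OF continuous_on_subset[OF Cc]]) auto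
  have bnd: "\<bar>(h x - C n x)\<^sup>2\<bar> \<le> (2*M)\<^sup>2" for n x
  proof -
    have "\<bar>h x - C n x\<bar> \<le> \<bar>2*M\<bar>" using hb[of x] Cb[of n x] M0 by linarith
    then show ?thesis by (simp add: abs_le_square_iff)
  qed
  have "(\<lambda>n. integral {0..pi/2} (\<lambda>x. (h x - C n x)\<^sup>2)) \<longlonglongrightarrow> 0"
  proof (rule dct_helper[OF N, where H = "\<lambda>x. (2*M)\<^sup>2"])
    show "(\<lambda>x. (h x - C n x)\<^sup>2) integrable_on {0..pi/2}" for n
    proof (rule measurable_bounded_by_integrable_imp_integrable_real[where g = "\<lambda>x. (2*M)\<^sup>2"])
      show "(\<lambda>x. (h x - C n x)\<^sup>2) \<in> borel_measurable (lebesgue_on {0..pi/2})"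
        using hm Cm[of n] by measurable
    qed (use bnd in auto)
    show "\<bar>(h x - C n x)\<^sup>2\<bar> \<le> (2*M)\<^sup>2" for n x by (rule bnd)
    fix x assume x: "x \<in> {0..pi/2} - N"
    then have "(\<lambda>n. G n x) \<longlonglongrightarrow> h x" using GL[of x] by auto
    then have "(\<lambda>n. C n x) \<longlonglongrightarrow> max (- M) (min M (h x))"
      unfolding C_def by (intro tendsto_intros)
    moreover have "max (- M) (min M (h x)) = h x" using hb[of x] by (auto simp: max_def min_def)
    ultimately have "(\<lambda>n. C n x) \<longlonglongrightarrow> h x" by simp
    then have "(\<lambda>n. (h x - C n x)\<^sup>2) \<longlonglongrightarrow> (h x - h x)\<^sup>2" by (intro tendsto_intros)
    then show "(\<lambda>n. (h x - C n x)\<^sup>2) \<longlonglongrightarrow> 0" by simp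
  qed (rule integrable_const_ivl)
  then obtain n where "integral {0..pi/2} (\<lambda>x. (h x - C n x)\<^sup>2) < e" using limit_small e by blast
  then show ?thesis using Cc Cb by blast
qed

lemma D3:
  fixes C :: "real \<Rightarrow> real"
  assumes Cc: "continuous_on UNIV C" and Cb: "\<And>x. \<bar>C x\<bar> \<le> M" and e: "0 < e"
  shows "\<exists>d. continuous_on {0..pi/2} d \<and> integral {0..pi/2} (\<lambda>u. (C u - cos u * d u)\<^sup>2) < e"
proof -
  have M0: "0 \<le> M" using abs_ge_zero[of "C 0"] Cb[of 0] by linarith
  define d where "d = (\<lambda>n u. C u * real (Suc n) / max 1 (real (Suc n) * cos u))"
  have dc: "continuous_on {0..pi/2} (d n)" for n
    unfolding d_def
    by (intro continuous_intros continuous_on_subset[OF Cc]) auto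
  have Wd: "cos u * d n u = C u * (real (Suc n) * cos u / max 1 (real (Suc n) * cos u))" for n u
    by (simp add: d_def)
  have ratio: "0 \<le> s / max 1 s \<and> s / max 1 s \<le> 1" if "0 \<le> s" for s :: real
    using that by (auto simp: max_def divide_le_eq_1)
  have bnd: "\<bar>(C u - cos u * d n u)\<^sup>2\<bar> \<le> (2*M)\<^sup>2" if u: "u \<in> {0..pi/2}" for n u
  proof -
    have "0 \<le> cos u" using u pi_gt_zero by (intro cos_ge_zero) auto
    then have r: "0 \<le> real (Suc n) * cos u / max 1 (real (Suc n) * cos u) \<and>
        real (Suc n) * cos u / max 1 (real (Suc n) * cos u) \<le> 1" by (intro ratio) simp
    define q where "q = real (Suc n) * cos u / max 1 (real (Suc n) * cos u)"
    have "\<bar>cos u * d n u\<bar> = \<bar>C u\<bar> * q" using r \<open>0 \<le> cos u\<close> unfolding Wd q_def by (simp add: abs_mult)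
    also have "\<dots> \<le> \<bar>C u\<bar>" using r unfolding q_def by (intro mult_left_le) auto
    finally have "\<bar>cos u * d n u\<bar> \<le> \<bar>C u\<bar>" .
    then have "\<bar>C u - cos u * d n u\<bar> \<le> \<bar>2*M\<bar>" using Cb[of u] M0 by linarith
    then show ?thesis by (simp add: abs_le_square_iff)
  qed
  have "(\<lambda>n. integral {0..pi/2} (\<lambda>u. (C u - cos u * d n u)\<^sup>2)) \<longlonglongrightarrow> 0"
  proof (rule dct_helper[OF negligible_sing[of "pi/2"], where H = "\<lambda>x. (2*M)\<^sup>2"])
    show "(\<lambda>u. (C u - cos u * d n u)\<^sup>2) integrable_on {0..pi/2}" for n
      by (rule integrable_continuous_real)
        (intro continuous_intros dc continuous_on_subset[OF Cc], auto)
    show "\<bar>(C u - cos u * d n u)\<^sup>2\<bar> \<le> (2*M)\<^sup>2" if "u \<in> {0..pi/2}" for n u using bnd that .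
    fix u assume u: "u \<in> {0..pi/2} - {pi/2}"
    then have cpos: "0 < cos u" by (intro cos_gt_zero_pi) auto
    obtain n0 :: nat where n0: "1 / cos u \<le> real n0" using real_arch_simple by blast
    have "(C u - cos u * d n u)\<^sup>2 = 0" if "n \<ge> n0" for n
    proof -
      have "1 \<le> real n0 * cos u" using n0 cpos by (simp add: field_simps)
      also have "\<dots> \<le> real (Suc n) * cos u" using that cpos by (intro mult_right_mono) auto
      finally have "1 \<le> real (Suc n) * cos u" .
      then show ?thesis unfolding Wd using cpos by (simp add: max_def)
    qed
    then have "eventually (\<lambda>n. (C u - cos u * d n u)\<^sup>2 = 0) sequentially"
      by (intro eventually_sequentiallyI[of n0])
    then show "(\<lambda>n. (C u - cos u * d n u)\<^sup>2) \<longlonglongrightarrow> 0" by (rule tendsto_eventually)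
  qed (rule integrable_const_ivl)
  then obtain n where "integral {0..pi/2} (\<lambda>u. (C u - cos u * d n u)\<^sup>2) < e" using limit_small e by blast
  then show ?thesis using dc by blast
qed

lemma inV_cont: "inV P \<Longrightarrow> continuous_on S P"
  by (induction rule: inV.induct) (auto simp: phi_def intro!: continuous_intros)

lemma D4:
  assumes dc: "continuous_on {0..pi/2} d" and e: "0 < e"
  shows "\<exists>P. inV P \<and> integral {0..pi/2} (\<lambda>u. (cos u * d u - P u)\<^sup>2) < e"
proof -
  define e' where "e' = min 1 (e/4)"
  have e'0: "0 < e'" using e by (simp add: e'_def)
  obtain E where E: "inE E" and EL: "\<forall>x\<in>{0..pi/2}. \<bar>d x - E x\<bar> < e'"
    using approx_E[OF dc e'0] by blast
  define P where "P = (\<lambda>u. cos u * E u)"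
  have PV: "inV P" unfolding P_def by (rule inV_cos_E[OF E])
  have "integral {0..pi/2} (\<lambda>u. (cos u * d u - P u)\<^sup>2) \<le> integral {0..pi/2} (\<lambda>u. e'\<^sup>2)"
  proof (rule integral_le)
    show "(\<lambda>u. (cos u * d u - P u)\<^sup>2) integrable_on {0..pi/2}"
      unfolding P_def by (rule integrable_continuous_real) (intro continuous_intros dc inE_cont[OF E])
    show "(\<lambda>u. e'\<^sup>2) integrable_on {0..pi/2}" by (rule integrable_const_ivl)
    fix u assume u: "u \<in> {0..pi/2}"
    have "\<bar>cos u * d u - P u\<bar> = \<bar>cos u\<bar> * \<bar>d u - E u\<bar>" by (simp add: P_def abs_mult[symmetric] algebra_simps)
    also have "\<dots> \<le> 1 * \<bar>d u - E u\<bar>" by (intro mult_right_mono) auto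
    also have "\<dots> \<le> \<bar>e'\<bar>" using EL u e'0 by fastforce
    finally show "(cos u * d u - P u)\<^sup>2 \<le> e'\<^sup>2" by (simp add: abs_le_square_iff)
  qed
  also have "\<dots> = pi/2 * e'\<^sup>2" by simp
  also have "\<dots> < e"
  proof -
    have "e' \<le> 1" by (simp add: e'_def)
    then have "e'\<^sup>2 \<le> e'" using e'0 by (simp add: power2_eq_square mult_left_le)
    also have "\<dots> \<le> e/4" by (simp add: e'_def)
    finally have "pi/2 * e'\<^sup>2 \<le> pi/2 * (e/4)" by (intro mult_left_mono) auto
    also have "\<dots> < e" using e pi_less_4 by (simp add: field_simps)
    finally show ?thesis .
  qed
  finally show ?thesis using PV by blast
qed

lemma density:
  assumes g: "L2_on g {0..pi/2}" and e: "0 < e"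
  shows "\<exists>P. inV P \<and> integral {0..pi/2} (\<lambda>u. (g u - P u)\<^sup>2) < e"
proof -
  define e0 where "e0 = e / 32"
  have e0: "0 < e0" using e by (simp add: e0_def)
  obtain h M where hm: "h \<in> borel_measurable (lebesgue_on {0..pi/2})" and hb: "\<forall>x. \<bar>h x\<bar> \<le> M"
    and a: "integral {0..pi/2} (\<lambda>u. (g u - h u)\<^sup>2) < e0"
    using D1[OF g e0] by blast
  obtain C where Cc: "continuous_on UNIV C" and Cb: "\<forall>x. \<bar>C x\<bar> \<le> M"
    and b: "integral {0..pi/2} (\<lambda>u. (h u - C u)\<^sup>2) < e0"
    using D2[OF hm _ e0] hb by blast
  obtain d where dc: "continuous_on {0..pi/2} d"
    and c: "integral {0..pi/2} (\<lambda>u. (C u - cos u * d u)\<^sup>2) < e0"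
    using D3[OF Cc _ e0] Cb by blast
  obtain P where PV: "inV P" and dd: "integral {0..pi/2} (\<lambda>u. (cos u * d u - P u)\<^sup>2) < e0"
    using D4[OF dc e0] by blast
  have Lh: "L2_on h {0..pi/2}"
  proof (rule L2_dom[OF hm])
    show "L2_on (\<lambda>x. M) {0..pi/2}" by (rule L2_cont) (rule continuous_on_const)
    fix x show "\<bar>h x\<bar> \<le> \<bar>M\<bar>" using hb abs_ge_self order_trans by blast
  qed
  have LC: "L2_on C {0..pi/2}" by (rule L2_cont[OF continuous_on_subset[OF Cc]]) simp
  have LW: "L2_on (\<lambda>u. cos u * d u) {0..pi/2}" by (rule L2_cont) (intro continuous_intros dc)
  have LP: "L2_on P {0..pi/2}" by (rule L2_cont[OF inV_cont[OF PV]])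
  have t1: "integral {0..pi/2} (\<lambda>u. (g u - P u)\<^sup>2) \<le>
     2 * integral {0..pi/2} (\<lambda>u. (g u - h u)\<^sup>2) + 2 * integral {0..pi/2} (\<lambda>u. (h u - P u)\<^sup>2)"
    by (rule sq_tri[OF g Lh LP])
  have t2: "integral {0..pi/2} (\<lambda>u. (h u - P u)\<^sup>2) \<le>
     2 * integral {0..pi/2} (\<lambda>u. (h u - C u)\<^sup>2) + 2 * integral {0..pi/2} (\<lambda>u. (C u - P u)\<^sup>2)"
    by (rule sq_tri[OF Lh LC LP])
  have t3: "integral {0..pi/2} (\<lambda>u. (C u - P u)\<^sup>2) \<le>
     2 * integral {0..pi/2} (\<lambda>u. (C u - cos u * d u)\<^sup>2) + 2 * integral {0..pi/2} (\<lambda>u. (cos u * d u - P u)\<^sup>2)"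
    by (rule sq_tri[OF LC LW LP])
  have "integral {0..pi/2} (\<lambda>u. (g u - P u)\<^sup>2) < e"
    using t1 t2 t3 a b c dd e unfolding e0_def by linarith
  then show ?thesis using PV by blast
qed

lemma exhaust:
  assumes "finite (X::int set)"
  shows "\<exists>N. \<forall>M\<ge>N. X \<subseteq> {-int M..int M}"
proof -
  have "finite ((\<lambda>k. nat \<bar>k\<bar>) ` X)" using assms by simp
  then obtain m where m: "\<forall>n\<in>(\<lambda>k. nat \<bar>k\<bar>) ` X. n \<le> m"
    using finite_nat_set_iff_bounded_le by blast
  show ?thesis
  proof (rule exI[of _ m], intro allI impI subsetI)
    fix M k assume M: "m \<le> M" and k: "k \<in> X"
    then have "nat \<bar>k\<bar> \<le> M" using m by force
    then show "k \<in> {-int M..int M}" by auto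
  qed
qed

lemma has_sum_exhaust:
  fixes g :: "int \<Rightarrow> real"
  assumes "g summable_on UNIV"
  shows "(\<lambda>N. \<Sum>k\<in>{-int N..int N}. g k) \<longlonglongrightarrow> infsum g UNIV"
proof -
  have lim: "(sum g \<longlongrightarrow> infsum g UNIV) (finite_subsets_at_top UNIV)"
    using has_sum_infsum[OF assms] unfolding has_sum_def .
  have fl: "filterlim (\<lambda>N::nat. {-int N..int N}) (finite_subsets_at_top UNIV) sequentially"
    unfolding filterlim_finite_subsets_at_top
  proof (intro allI impI)
    fix X :: "int set" assume "finite X \<and> X \<subseteq> UNIV"
    then obtain N where "\<forall>M\<ge>N. X \<subseteq> {-int M..int M}" using exhaust by blast
    then show "eventually (\<lambda>y. finite {-int y..int y} \<and> X \<subseteq> {-int y..int y} \<and> {-int y..int y} \<subseteq> UNIV) sequentially"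
      by (intro eventually_sequentiallyI[of N]) auto
  qed
  show ?thesis using tendsto_compose_filtermap[of "sum g"] lim fl
    by (metis filterlim_compose filterlim_def)
qed

lemma nonneg_lim_has_sum:
  fixes g :: "int \<Rightarrow> real"
  assumes nn: "\<And>k. 0 \<le> g k" and lim: "(\<lambda>N. \<Sum>k\<in>{-int N..int N}. g k) \<longlonglongrightarrow> L"
  shows "(g has_sum L) UNIV"
proof -
  have inc: "incseq (\<lambda>N. \<Sum>k\<in>{-int N..int N}. g k)"
    by (rule incseq_SucI, rule sum_mono2) (auto simp: nn)
  have le: "(\<Sum>k\<in>{-int N..int N}. g k) \<le> L" for N by (rule incseq_le[OF inc lim])
  have bdd: "bdd_above (sum g ` {F. F \<subseteq> UNIV \<and> finite F})"
  proof (rule bdd_aboveI[of _ L])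
    fix x assume "x \<in> sum g ` {F. F \<subseteq> UNIV \<and> finite F}"
    then obtain F where F: "finite F" and x: "x = sum g F" by auto
    obtain N where "\<forall>M\<ge>N. F \<subseteq> {-int M..int M}" using exhaust[OF F] by blast
    then have "sum g F \<le> (\<Sum>k\<in>{-int N..int N}. g k)" by (intro sum_mono2) (auto simp: nn)
    then show "x \<le> L" using le[of N] x by simp
  qed
  have sm: "g summable_on UNIV" by (rule nonneg_bdd_above_summable_on[OF _ bdd]) (simp add: nn)
  have "infsum g UNIV = L" using LIMSEQ_unique[OF has_sum_exhaust[OF sm] lim] .
  then show ?thesis using sm by (simp add: has_sum_iff)
qed

lemma partial_err:
  assumes f: "L2_on f {0..pi/2}"
  shows "integral {0..pi/2} (\<lambda>u. (f u - (\<Sum>k\<in>{-int N..int N}. coeff_k f k * phi k u))\<^sup>2)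
       = integral {0..pi/2} (\<lambda>u. (f u)\<^sup>2) - pi/4 * (\<Sum>k\<in>{-int N..int N}. (coeff_k f k)\<^sup>2)"
  using expand[OF f, of "{-int N..int N}" "coeff_k f"] by simp

lemma part1:
  assumes f: "L2_on f {0..pi/2}"
  shows "(\<lambda>N. integral {0..pi/2} (\<lambda>u. (f u - (\<Sum>k\<in>{-int N..int N}. coeff_k f k * phi k u))\<^sup>2)) \<longlonglongrightarrow> 0"
proof (rule LIMSEQ_I)
  fix r :: real assume r: "0 < r"
  obtain P where PV: "inV P" and Pe: "integral {0..pi/2} (\<lambda>u. (f u - P u)\<^sup>2) < r"
    using density[OF f r] by blast
  obtain d N where dN: "\<forall>M\<ge>N. \<forall>u. P u = (\<Sum>k\<in>{-int M..int M}. d k * phi k u)"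
    using inV_repr[OF PV] by blast
  show "\<exists>no. \<forall>n\<ge>no. norm (integral {0..pi/2} (\<lambda>u. (f u - (\<Sum>k\<in>{-int n..int n}. coeff_k f k * phi k u))\<^sup>2) - 0) < r"
  proof (rule exI[of _ N], intro allI impI)
    fix n assume n: "N \<le> n"
    have nn: "0 \<le> integral {0..pi/2} (\<lambda>u. (f u - (\<Sum>k\<in>{-int n..int n}. coeff_k f k * phi k u))\<^sup>2)"
      by (rule integral_nonneg) (use L2_diff[OF f L2_sum_phi] in \<open>auto simp: L2_bm\<close>)
    have "P = (\<lambda>u. \<Sum>k\<in>{-int n..int n}. d k * phi k u)" using dN n by auto
    then have "integral {0..pi/2} (\<lambda>u. (f u - P u)\<^sup>2)
       = integral {0..pi/2} (\<lambda>u. (f u)\<^sup>2) - pi/4 * (\<Sum>k\<in>{-int n..int n}. (coeff_k f k)\<^sup>2)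
         + pi/4 * (\<Sum>k\<in>{-int n..int n}. (d k - coeff_k f k)\<^sup>2)"
      using expand[OF f] by simp
    moreover have "0 \<le> pi/4 * (\<Sum>k\<in>{-int n..int n}. (d k - coeff_k f k)\<^sup>2)"
      by (intro mult_nonneg_nonneg sum_nonneg) auto
    ultimately have "integral {0..pi/2} (\<lambda>u. (f u - (\<Sum>k\<in>{-int n..int n}. coeff_k f k * phi k u))\<^sup>2) < r"
      using Pe partial_err[OF f, of n] by linarith
    then show "norm (integral {0..pi/2} (\<lambda>u. (f u - (\<Sum>k\<in>{-int n..int n}. coeff_k f k * phi k u))\<^sup>2) - 0) < r"
      using nn by simp
  qed
qed

lemma parseval:
  assumes f: "L2_on f {0..pi/2}"
  shows "((\<lambda>k. (coeff_k f k)\<^sup>2) has_sum (4/pi * integral {0..pi/2} (\<lambda>u. (f u)\<^sup>2))) UNIV"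
proof (rule nonneg_lim_has_sum)
  show "0 \<le> (coeff_k f k)\<^sup>2" for k by simp
  have "(\<lambda>N. 4/pi * (integral {0..pi/2} (\<lambda>u. (f u)\<^sup>2) -
      integral {0..pi/2} (\<lambda>u. (f u - (\<Sum>k\<in>{-int N..int N}. coeff_k f k * phi k u))\<^sup>2)))
      \<longlonglongrightarrow> 4/pi * (integral {0..pi/2} (\<lambda>u. (f u)\<^sup>2) - 0)"
    by (intro tendsto_intros part1[OF f])
  moreover have "4/pi * (integral {0..pi/2} (\<lambda>u. (f u)\<^sup>2) -
      integral {0..pi/2} (\<lambda>u. (f u - (\<Sum>k\<in>{-int N..int N}. coeff_k f k * phi k u))\<^sup>2))
      = (\<Sum>k\<in>{-int N..int N}. (coeff_k f k)\<^sup>2)" for N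
    using partial_err[OF f, of N] by simp
  ultimately show "(\<lambda>N. \<Sum>k\<in>{-int N..int N}. (coeff_k f k)\<^sup>2) \<longlonglongrightarrow> 4/pi * integral {0..pi/2} (\<lambda>u. (f u)\<^sup>2)"
    by simp
qed

lemma cos_int_gen:
  fixes a x :: real
  assumes a: "a \<noteq> 0" and x: "0 \<le> x"
  shows "((\<lambda>u. cos (a*u)) has_integral (sin (a*x) / a)) {0..x}"
proof -
  have "((\<lambda>u. cos (a*u)) has_integral ((\<lambda>u. sin (a*u)/a) x - (\<lambda>u. sin (a*u)/a) 0)) {0..x}"
    apply (rule fundamental_theorem_of_calculus)
     apply (rule x)
    apply (rule has_real_derivative_iff_has_vector_derivative[THEN iffD1])
    using a
    by (auto intro!: derivative_eq_intros)
  then show ?thesis by simp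
qed

lemma odd_ne0: "4 * real_of_int k + 1 \<noteq> 0"
proof
  assume "4 * real_of_int k + 1 = 0"
  then have "real_of_int (4*k+1) = 0" by simp
  then have "4*k+1 = 0" by linarith
  then show False by presburger
qed

lemma odd_abs_ge1: "1 \<le> \<bar>4 * real_of_int k + 1\<bar>"
proof -
  have "4*k+1 \<noteq> 0" by presburger
  then have "1 \<le> \<bar>4*k+1\<bar>" by linarith
  then have "1 \<le> \<bar>real_of_int (4*k+1)\<bar>" by (simp only: of_int_abs[symmetric] of_int_1_le_iff)
  then show ?thesis by simp
qed

lemma T_phi:
  assumes v: "v \<in> {0..pi/2}"
  shows "T_op (phi k) v = phi k v / (4 * real_of_int k + 1)"
proof -
  define a where "a = 4 * real_of_int k + 1"
  have a0: "a \<noteq> 0" using odd_ne0 by (simp add: a_def)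
  have "T_op (phi k) v = sin (a * (pi/2 - v)) / a"
    unfolding T_op_def phi_def a_def[symmetric]
    by (rule integral_unique[OF cos_int_gen[OF a0]]) (use v in auto)
  also have "sin (a * (pi/2 - v)) = cos (pi/2 - a * (pi/2 - v))" using sin_cos_eq[of "a * (pi/2 - v)"] by simp
  also have "pi/2 - a * (pi/2 - v) = a * v - (2*pi) * real_of_int k"
    by (simp add: a_def algebra_simps)
  also have "cos (a * v - (2*pi) * real_of_int k) = cos (a * v)"
    by (simp add: cos_diff)
  finally have "T_op (phi k) v = cos (a * v) / a" .
  then show ?thesis unfolding a_def by (simp only: phi_def[of k v])
qed

lemma phi_integrable: "phi k integrable_on {a..b}"
  unfolding phi_def by (rule integrable_continuous_real) (intro continuous_intros)

lemma T_sum: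
  assumes K: "finite K" and v: "v \<in> {0..pi/2}"
  shows "T_op (\<lambda>u. \<Sum>k\<in>K. d k * phi k u) v = (\<Sum>k\<in>K. (d k / (4 * real_of_int k + 1)) * phi k v)"
proof -
  have "T_op (\<lambda>u. \<Sum>k\<in>K. d k * phi k u) v = (\<Sum>k\<in>K. integral {0..pi/2 - v} (\<lambda>u. d k * phi k u))"
    unfolding T_op_def using K by (intro integral_sum) (auto intro: integrable_on_mult_right phi_integrable)
  also have "\<dots> = (\<Sum>k\<in>K. d k * T_op (phi k) v)" by (simp add: T_op_def)
  also have "\<dots> = (\<Sum>k\<in>K. (d k / (4 * real_of_int k + 1)) * phi k v)" using T_phi[OF v] by simp
  finally show ?thesis .
qed

lemma ip_sum:
  assumes K: "finite K"
  shows "integral {0..pi/2} (\<lambda>v. (\<Sum>k\<in>K. e k * phi k v) * phi j v) = (if j \<in> K then e j * (pi/4) else 0)"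
proof -
  have ii: "integral {0..pi/2} (\<lambda>u. phi k u * phi j u) = (if k = j then pi/4 else 0)" for k
    using phi_orth integral_unique by blast
  have int: "(\<lambda>u. phi k u * phi j u) integrable_on {0..pi/2}" for k
    using phi_orth has_integral_integrable by blast
  have "integral {0..pi/2} (\<lambda>v. (\<Sum>k\<in>K. e k * phi k v) * phi j v)
      = integral {0..pi/2} (\<lambda>v. \<Sum>k\<in>K. e k * (phi k v * phi j v))"
    by (simp add: sum_distrib_right mult.assoc)
  also have "\<dots> = (\<Sum>k\<in>K. e k * (if k = j then pi/4 else 0))"
    using K int ii by (simp add: integral_sum integrable_on_mult_right)
  also have "\<dots> = (if j \<in> K then e j * (pi/4) else 0)"
  proof -
    have "(\<Sum>k\<in>K. e k * (if k = j then pi/4 else 0)) = (\<Sum>k\<in>K. if k = j then e j * (pi/4) else 0)"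
      by (rule sum.cong) auto
    then show ?thesis using K by simp
  qed
  finally show ?thesis .
qed

lemma T_cont:
  fixes g :: "real \<Rightarrow> real"
  assumes g: "g integrable_on {0..pi/2}"
  shows "continuous_on {0..pi/2} (T_op g)"
proof -
  have G: "continuous_on {0..pi/2} (\<lambda>x. integral {0..x} g)" by (rule indefinite_integral_continuous_1[OF g])
  have "continuous_on {0..pi/2} (\<lambda>v. integral {0..pi/2 - v} g)"
    by (rule continuous_on_compose2[OF G]) (auto intro!: continuous_intros)
  then show ?thesis by (simp add: T_op_def)
qed

lemma L2_one: "L2_on (\<lambda>x. 1) {0..pi/2}" by (rule L2_cont) (rule continuous_on_const)

lemma L2_integrable:
  fixes g :: "real \<Rightarrow> real"
  assumes "L2_on g {0..pi/2}" shows "g integrable_on {0..pi/2}"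
  using L2_prod[OF assms L2_one] by simp

lemma L2_abs_integrable:
  fixes g :: "real \<Rightarrow> real"
  assumes "L2_on g {0..pi/2}" shows "(\<lambda>x. \<bar>g x\<bar>) integrable_on {0..pi/2}"
  using L2_prod_abs[OF assms L2_one] by simp

lemma L2_T:
  fixes g :: "real \<Rightarrow> real"
  assumes "L2_on g {0..pi/2}" shows "L2_on (T_op g) {0..pi/2}"
  by (rule L2_cont[OF T_cont[OF L2_integrable[OF assms]]])

lemma T_diff_bound:
  fixes g P :: "real \<Rightarrow> real"
  assumes g: "L2_on g {0..pi/2}" and P: "L2_on P {0..pi/2}" and v: "v \<in> {0..pi/2}"
  shows "\<bar>T_op g v - T_op P v\<bar> \<le> integral {0..pi/2} (\<lambda>u. \<bar>g u - P u\<bar>)"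
proof -
  define x where "x = pi/2 - v"
  have sub: "{0..x} \<subseteq> {0..pi/2}" using v by (auto simp: x_def)
  have gi: "g integrable_on {0..x}" by (rule integrable_subinterval_real[OF L2_integrable[OF g] sub])
  have Pi: "P integrable_on {0..x}" by (rule integrable_subinterval_real[OF L2_integrable[OF P] sub])
  have Di: "(\<lambda>u. \<bar>g u - P u\<bar>) integrable_on {0..pi/2}" by (rule L2_abs_integrable[OF L2_diff[OF g P]])
  have Dx: "(\<lambda>u. \<bar>g u - P u\<bar>) integrable_on {0..x}" by (rule integrable_subinterval_real[OF Di sub])
  have "T_op g v - T_op P v = integral {0..x} g - integral {0..x} P"
    by (simp add: T_op_def x_def)
  also have "\<dots> = integral {0..x} (\<lambda>u. g u - P u)"
    by (rule integral_diff[OF gi Pi, symmetric])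
  also have "\<bar>\<dots>\<bar> \<le> integral {0..x} (\<lambda>u. \<bar>g u - P u\<bar>)"
    using integral_norm_bound_integral[OF integrable_diff[OF gi Pi] Dx] by simp
  also have "\<dots> \<le> integral {0..pi/2} (\<lambda>u. \<bar>g u - P u\<bar>)"
    by (rule integral_subset_le[OF sub Dx Di]) simp
  finally show ?thesis .
qed

lemma approx_L1:
  fixes g :: "real \<Rightarrow> real"
  assumes g: "L2_on g {0..pi/2}" and dl: "0 < dl"
  shows "\<exists>P. inV P \<and> integral {0..pi/2} (\<lambda>u. \<bar>g u - P u\<bar>) < dl"
proof -
  define t where "t = dl / pi"
  have t: "0 < t" using dl by (simp add: t_def)
  obtain P where PV: "inV P" and Pe: "integral {0..pi/2} (\<lambda>u. (g u - P u)\<^sup>2) < t * dl"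
    using density[OF g] t dl by (metis mult_pos_pos)
  have LD: "L2_on (\<lambda>u. g u - P u) {0..pi/2}" by (rule L2_diff[OF g L2_cont[OF inV_cont[OF PV]]])
  have D2i: "(\<lambda>u. (g u - P u)\<^sup>2) integrable_on {0..pi/2}" using LD by (simp add: L2_bm)
  have "integral {0..pi/2} (\<lambda>u. \<bar>g u - P u\<bar>) \<le> integral {0..pi/2} (\<lambda>u. t/2 + (g u - P u)\<^sup>2 / (2*t))"
  proof (rule integral_le[OF L2_abs_integrable[OF LD]])
    show "(\<lambda>u. t/2 + (g u - P u)\<^sup>2 / (2*t)) integrable_on {0..pi/2}"
      by (intro integrable_add integrable_const_ivl) (rule integrable_on_mult_left[OF D2i, of "1/(2*t)", simplified])
    fix u
    have "0 \<le> (\<bar>g u - P u\<bar> - t)\<^sup>2" by simp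
    then have "2 * t * \<bar>g u - P u\<bar> \<le> t\<^sup>2 + (g u - P u)\<^sup>2"
      by (simp add: power2_eq_square algebra_simps)
    then show "\<bar>g u - P u\<bar> \<le> t/2 + (g u - P u)\<^sup>2 / (2*t)"
      using t by (simp add: field_simps power2_eq_square)
  qed
  also have "\<dots> = integral {0..pi/2} (\<lambda>u. t/2) + integral {0..pi/2} (\<lambda>u. (g u - P u)\<^sup>2 / (2*t))"
    by (rule integral_add[OF integrable_const_ivl]) (rule integrable_on_mult_left[OF D2i, of "1/(2*t)", simplified])
  also have "\<dots> = pi/2 * (t/2) + integral {0..pi/2} (\<lambda>u. (g u - P u)\<^sup>2) / (2*t)"
    by simp
  also have "\<dots> < dl"
  proof -
    have "integral {0..pi/2} (\<lambda>u. (g u - P u)\<^sup>2) / (2*t) < (t * dl) / (2*t)"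
      using Pe t by (intro divide_strict_right_mono) auto
    also have "\<dots> = dl/2" using t by simp
    finally have a: "integral {0..pi/2} (\<lambda>u. (g u - P u)\<^sup>2) / (2*t) < dl/2" .
    have b: "pi/2 * (t/2) = dl/4" by (simp add: t_def)
    show ?thesis using a b dl by linarith
  qed
  finally show ?thesis using PV by blast
qed

lemma coeff_T:
  fixes g :: "real \<Rightarrow> real"
  assumes g: "L2_on g {0..pi/2}"
  shows "coeff_k (T_op g) j = coeff_k g j / (4 * real_of_int j + 1)"
proof -
  define lam where "lam = 1 / (4 * real_of_int j + 1)"
  have lam1: "\<bar>lam\<bar> \<le> 1" using odd_abs_ge1[of j] by (simp add: lam_def)
  define A where "A = integral {0..pi/2} (\<lambda>v. T_op g v * phi j v)"
  define C where "C = integral {0..pi/2} (\<lambda>v. g v * phi j v)"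
  have bound: "\<bar>A - lam * C\<bar> \<le> (pi/2 + 1) * dl" if dl: "0 < dl" for dl
  proof -
    obtain P where PV: "inV P" and Pe: "integral {0..pi/2} (\<lambda>u. \<bar>g u - P u\<bar>) < dl"
      using approx_L1[OF g dl] by blast
    obtain d N where dN: "\<forall>M\<ge>N. \<forall>u. P u = (\<Sum>k\<in>{-int M..int M}. d k * phi k u)"
      using inV_repr[OF PV] by blast
    have Peq: "P = (\<lambda>u. \<Sum>k\<in>{-int N..int N}. d k * phi k u)" using dN by auto
    have LP: "L2_on P {0..pi/2}" by (rule L2_cont[OF inV_cont[OF PV]])
    define e1 where "e1 = integral {0..pi/2} (\<lambda>u. \<bar>g u - P u\<bar>)"
    define B where "B = integral {0..pi/2} (\<lambda>v. T_op P v * phi j v)"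
    define D where "D = integral {0..pi/2} (\<lambda>v. P v * phi j v)"
    have BD: "B = lam * D"
    proof -
      have "B = integral {0..pi/2} (\<lambda>v. (\<Sum>k\<in>{-int N..int N}. (d k / (4 * real_of_int k + 1)) * phi k v) * phi j v)"
        unfolding B_def Peq by (rule integral_cong) (simp add: T_sum)
      also have "\<dots> = (if j \<in> {-int N..int N} then (d j / (4 * real_of_int j + 1)) * (pi/4) else 0)"
        by (rule ip_sum) simp
      finally have B1: "B = (if j \<in> {-int N..int N} then (d j / (4 * real_of_int j + 1)) * (pi/4) else 0)" .
      have D1: "D = (if j \<in> {-int N..int N} then d j * (pi/4) else 0)"
        unfolding D_def Peq by (rule ip_sum) simp
      show ?thesis using B1 D1 by (simp add: lam_def)
    qed
    have phib: "\<bar>phi j v\<bar> \<le> 1" for v by (simp add: phi_def)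
    have AB: "\<bar>A - B\<bar> \<le> pi/2 * e1"
    proof -
      have i1: "(\<lambda>v. T_op g v * phi j v) integrable_on {0..pi/2}" by (rule L2_prod[OF L2_T[OF g] L2_phi])
      have i2: "(\<lambda>v. T_op P v * phi j v) integrable_on {0..pi/2}" by (rule L2_prod[OF L2_T[OF LP] L2_phi])
      have "A - B = integral {0..pi/2} (\<lambda>v. T_op g v * phi j v - T_op P v * phi j v)"
        unfolding A_def B_def by (rule integral_diff[OF i1 i2, symmetric])
      also have "norm \<dots> \<le> integral {0..pi/2} (\<lambda>v. e1)"
      proof (rule integral_norm_bound_integral[OF integrable_diff[OF i1 i2] integrable_const_ivl])
        fix v assume v: "v \<in> {0..pi/2}"
        have "norm (T_op g v * phi j v - T_op P v * phi j v) = \<bar>T_op g v - T_op P v\<bar> * \<bar>phi j v\<bar>"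
          by (simp add: abs_mult[symmetric] algebra_simps)
        also have "\<dots> \<le> e1 * 1"
          using T_diff_bound[OF g LP v] phib[of v] unfolding e1_def
          by (intro mult_mono) auto
        finally show "norm (T_op g v * phi j v - T_op P v * phi j v) \<le> e1" by simp
      qed
      finally show ?thesis by simp
    qed
    have CD: "\<bar>C - D\<bar> \<le> e1"
    proof -
      have i1: "(\<lambda>v. g v * phi j v) integrable_on {0..pi/2}" by (rule L2_prod[OF g L2_phi])
      have i2: "(\<lambda>v. P v * phi j v) integrable_on {0..pi/2}" by (rule L2_prod[OF LP L2_phi])
      have "C - D = integral {0..pi/2} (\<lambda>v. g v * phi j v - P v * phi j v)"
        unfolding C_def D_def by (rule integral_diff[OF i1 i2, symmetric])
      also have "norm \<dots> \<le> integral {0..pi/2} (\<lambda>u. \<bar>g u - P u\<bar>)"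
      proof (rule integral_norm_bound_integral[OF integrable_diff[OF i1 i2] L2_abs_integrable[OF L2_diff[OF g LP]]])
        fix v assume v: "v \<in> {0..pi/2}"
        have "norm (g v * phi j v - P v * phi j v) = \<bar>g v - P v\<bar> * \<bar>phi j v\<bar>"
          by (simp add: abs_mult[symmetric] algebra_simps)
        also have "\<dots> \<le> \<bar>g v - P v\<bar> * 1"
          using phib[of v] by (intro mult_left_mono) auto
        finally show "norm (g v * phi j v - P v * phi j v) \<le> \<bar>g v - P v\<bar>" by simp
      qed
      finally show ?thesis unfolding e1_def by simp
    qed
    have "A - lam * C = (A - B) + lam * (D - C)" using BD by (simp add: algebra_simps)
    then have "\<bar>A - lam * C\<bar> \<le> \<bar>A - B\<bar> + \<bar>lam\<bar> * \<bar>D - C\<bar>" by (simp add: abs_mult[symmetric] abs_triangle_ineq)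
    also have "\<dots> \<le> pi/2 * e1 + 1 * e1"
      using AB CD lam1 by (intro add_mono mult_mono) (auto simp: abs_minus_commute)
    also have "\<dots> = (pi/2 + 1) * e1" by (simp add: algebra_simps)
    also have "\<dots> \<le> (pi/2 + 1) * dl"
      using Pe unfolding e1_def by (intro mult_left_mono) auto
    finally show ?thesis .
  qed
  have "A - lam * C = 0"
  proof (rule ccontr)
    assume ne: "A - lam * C \<noteq> 0"
    define dl where "dl = \<bar>A - lam * C\<bar> / (pi/2 + 2)"
    have dl: "0 < dl" using ne by (simp add: dl_def add_pos_pos)
    have "\<bar>A - lam * C\<bar> \<le> (pi/2 + 1) * dl" by (rule bound[OF dl])
    also have "\<dots> < (pi/2 + 2) * dl" using dl by (intro mult_strict_right_mono) auto
    also have "\<dots> = \<bar>A - lam * C\<bar>"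
    proof -
      have "pi/2 + 2 \<noteq> 0" using pi_gt_zero by linarith
      then show ?thesis by (simp add: dl_def)
    qed
    finally show False by simp
  qed
  then have "A = lam * C" by simp
  then show ?thesis by (simp add: coeff_phi A_def C_def lam_def)
qed

lemma L2_Tn:
  fixes f :: "real \<Rightarrow> real"
  assumes f: "L2_on f {0..pi/2}"
  shows "L2_on ((T_op ^^ n) f) {0..pi/2}"
  by (induction n) (auto simp: f L2_T)

lemma coeff_Tn:
  fixes f :: "real \<Rightarrow> real"
  assumes f: "L2_on f {0..pi/2}"
  shows "coeff_k ((T_op ^^ n) f) k = coeff_k f k / (4 * real_of_int k + 1) ^ n"
proof (induction n)
  case 0 then show ?case by simp
next
  case (Suc n)
  have "coeff_k ((T_op ^^ Suc n) f) k = coeff_k ((T_op ^^ n) f) k / (4 * real_of_int k + 1)"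
    using coeff_T[OF L2_Tn[OF f, of n]] by simp
  then show ?case using Suc by (simp add: field_simps)
qed

lemma coeff_add:
  fixes a b :: "real \<Rightarrow> real"
  assumes a: "L2_on a {0..pi/2}" and b: "L2_on b {0..pi/2}"
  shows "coeff_k (\<lambda>x. a x + b x) k = coeff_k a k + coeff_k b k"
proof -
  have "integral {0..pi/2} (\<lambda>u. (a u + b u) * phi k u) = integral {0..pi/2} (\<lambda>u. a u * phi k u + b u * phi k u)"
    by (simp add: algebra_simps)
  also have "\<dots> = integral {0..pi/2} (\<lambda>u. a u * phi k u) + integral {0..pi/2} (\<lambda>u. b u * phi k u)"
    by (rule integral_add[OF L2_prod[OF a L2_phi] L2_prod[OF b L2_phi]])
  finally show ?thesis by (simp add: coeff_phi algebra_simps)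
qed

lemma coeff_diff:
  fixes a b :: "real \<Rightarrow> real"
  assumes a: "L2_on a {0..pi/2}" and b: "L2_on b {0..pi/2}"
  shows "coeff_k (\<lambda>x. a x - b x) k = coeff_k a k - coeff_k b k"
proof -
  have "integral {0..pi/2} (\<lambda>u. (a u - b u) * phi k u) = integral {0..pi/2} (\<lambda>u. a u * phi k u - b u * phi k u)"
    by (simp add: algebra_simps)
  also have "\<dots> = integral {0..pi/2} (\<lambda>u. a u * phi k u) - integral {0..pi/2} (\<lambda>u. b u * phi k u)"
    by (rule integral_diff[OF L2_prod[OF a L2_phi] L2_prod[OF b L2_phi]])
  finally have e: "integral {0..pi/2} (\<lambda>u. (a u - b u) * phi k u) = integral {0..pi/2} (\<lambda>u. a u * phi k u) - integral {0..pi/2} (\<lambda>u. b u * phi k u)" .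
  show ?thesis unfolding coeff_phi e by (simp add: right_diff_distrib)
qed

lemma polar:
  fixes a b :: "real \<Rightarrow> real"
  assumes a: "L2_on a {0..pi/2}" and b: "L2_on b {0..pi/2}"
  shows "((\<lambda>k. coeff_k a k * coeff_k b k) has_sum (4/pi * integral {0..pi/2} (\<lambda>u. a u * b u))) UNIV"
proof -
  define IP where "IP = integral {0..pi/2} (\<lambda>u. (a u + b u)\<^sup>2)"
  define IM where "IM = integral {0..pi/2} (\<lambda>u. (a u - b u)\<^sup>2)"
  have H1: "((\<lambda>k. (coeff_k a k + coeff_k b k)\<^sup>2) has_sum (4/pi * IP)) UNIV"
    using parseval[OF L2_add[OF a b]] unfolding IP_def coeff_add[OF a b] .
  have H2: "((\<lambda>k. (coeff_k a k - coeff_k b k)\<^sup>2) has_sum (4/pi * IM)) UNIV"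
    using parseval[OF L2_diff[OF a b]] unfolding IM_def coeff_diff[OF a b] .
  have H3: "((\<lambda>k. (coeff_k a k + coeff_k b k)\<^sup>2 + (-1) * (coeff_k a k - coeff_k b k)\<^sup>2)
      has_sum (4/pi * IP + (-1) * (4/pi * IM))) UNIV"
    by (rule has_sum_add[OF H1 has_sum_cmult_right[OF H2]])
  have H4: "((\<lambda>k. 1/4 * ((coeff_k a k + coeff_k b k)\<^sup>2 + (-1) * (coeff_k a k - coeff_k b k)\<^sup>2))
      has_sum (1/4 * (4/pi * IP + (-1) * (4/pi * IM)))) UNIV"
    by (rule has_sum_cmult_right[OF H3])
  have fe: "(\<lambda>k. 1/4 * ((coeff_k a k + coeff_k b k)\<^sup>2 + (-1) * (coeff_k a k - coeff_k b k)\<^sup>2))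
      = (\<lambda>k. coeff_k a k * coeff_k b k)"
    by (simp add: power2_eq_square algebra_simps)
  have ipm: "IP - IM = 4 * integral {0..pi/2} (\<lambda>u. a u * b u)"
  proof -
    have i1: "(\<lambda>u. (a u + b u)\<^sup>2) integrable_on {0..pi/2}" using L2_add[OF a b] by (simp add: L2_bm)
    have i2: "(\<lambda>u. (a u - b u)\<^sup>2) integrable_on {0..pi/2}" using L2_diff[OF a b] by (simp add: L2_bm)
    have "IP - IM = integral {0..pi/2} (\<lambda>u. (a u + b u)\<^sup>2 - (a u - b u)\<^sup>2)"
      unfolding IP_def IM_def by (rule integral_diff[OF i1 i2, symmetric])
    also have "\<dots> = integral {0..pi/2} (\<lambda>u. 4 * (a u * b u))"
      by (simp add: power2_eq_square algebra_simps)
    finally show ?thesis by simp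
  qed
  have ve: "1/4 * (4/pi * IP + (-1) * (4/pi * IM)) = 4/pi * integral {0..pi/2} (\<lambda>u. a u * b u)"
  proof -
    have "1/4 * (4/pi * IP + (-1) * (4/pi * IM)) = (IP - IM) / pi" by (simp add: field_simps)
    then show ?thesis using ipm by simp
  qed
  show ?thesis using H4 unfolding fe ve .
qed

theorem corollary3p2:
  fixes f :: "real \<Rightarrow> real"
  assumes "L2_on f {0..pi/2}"
  shows "((\<lambda>N::nat. integral {0..pi/2}
            (\<lambda>u. (f u - (\<Sum>k\<in>{-int N..int N}. coeff_k f k * cos ((4 * real_of_int k + 1) * u)))\<^sup>2))
           \<longlonglongrightarrow> 0) \<and>
         (\<forall>n::nat. (\<lambda>k::int. (coeff_k f k)\<^sup>2 / (4 * real_of_int k + 1) ^ n) summable_on UNIV \<and>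
           integral {0..pi/2} (\<lambda>u. f u * (T_op ^^ n) f u)
             = pi / 4 * (\<Sum>\<^sub>\<infinity>k::int. (coeff_k f k)\<^sup>2 / (4 * real_of_int k + 1) ^ n))"
proof (intro conjI allI)
  show "(\<lambda>N::nat. integral {0..pi/2}
            (\<lambda>u. (f u - (\<Sum>k\<in>{-int N..int N}. coeff_k f k * cos ((4 * real_of_int k + 1) * u)))\<^sup>2))
           \<longlonglongrightarrow> 0"
    using part1[OF assms] unfolding phi_def .
  fix n :: nat
  have hs: "((\<lambda>k. coeff_k f k * coeff_k ((T_op ^^ n) f) k) has_sum
      (4/pi * integral {0..pi/2} (\<lambda>u. f u * (T_op ^^ n) f u))) UNIV"
    by (rule polar[OF assms L2_Tn[OF assms]])
  have fe: "(\<lambda>k. coeff_k f k * coeff_k ((T_op ^^ n) f) k) = (\<lambda>k. (coeff_k f k)\<^sup>2 / (4 * real_of_int k + 1) ^ n)"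
    by (simp add: coeff_Tn[OF assms] power2_eq_square)
  have hs2: "((\<lambda>k. (coeff_k f k)\<^sup>2 / (4 * real_of_int k + 1) ^ n) has_sum
      (4/pi * integral {0..pi/2} (\<lambda>u. f u * (T_op ^^ n) f u))) UNIV"
    using hs unfolding fe .
  show "(\<lambda>k::int. (coeff_k f k)\<^sup>2 / (4 * real_of_int k + 1) ^ n) summable_on UNIV"
    using hs2 has_sum_iff by blast
  have "(\<Sum>\<^sub>\<infinity>k::int. (coeff_k f k)\<^sup>2 / (4 * real_of_int k + 1) ^ n)
      = 4/pi * integral {0..pi/2} (\<lambda>u. f u * (T_op ^^ n) f u)"
    using hs2 has_sum_iff by blast
  then show "integral {0..pi/2} (\<lambda>u. f u * (T_op ^^ n) f u)
             = pi / 4 * (\<Sum>\<^sub>\<infinity>k::int. (coeff_k f k)\<^sup>2 / (4 * real_of_int k + 1) ^ n)"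
    by simp
qed

end
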